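(* Let $\tilde L$ be a minimum-size counterexample. For every $x\in\tilde L\setminus\{0_{\tilde L},1_{\tilde L}\}$, the set $({\parallel}x)=\{y\in\tilde L: y \text{ is incomparable with } x\}$ is not a chain; that is, there exist two elements of $\tilde L$ that are incomparable with each other and each incomparable with $x$.
   Context: For a poset $P$, $x$ upper covers $y$ if $y<x$ with nothing strictly between; join-irreducible: upper covers exactly one element. For $x\in P$, ${\uparrow}x=\{y: x\le y\}$. A chain is a totally ordered subset (the empty set and singletons count as chains). $0_{\tilde L}$, $1_{\tilde L}$ are the least and greatest elements. A counterexample is a finite lattice $L$ with $|L|>1$ in which every join-irreducible $j$ satisfies $|{\uparrow}j|>|L|/2$; a minimum-size counterexample is a counterexample $\tilde L$ such that no counterexample has fewer elements. *)

theory Defs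
  imports Complex_Main
begin

text \<open>A finite poset/lattice is represented by a carrier set A together with an order
relation le (only its values on A matter).\<close>

definition poset_on :: "'a set \<Rightarrow> ('a \<Rightarrow> 'a \<Rightarrow> bool) \<Rightarrow> bool" where
  "poset_on A le \<longleftrightarrow>
     (\<forall>x\<in>A. le x x) \<and>
     (\<forall>x\<in>A. \<forall>y\<in>A. le x y \<and> le y x \<longrightarrow> x = y) \<and>
     (\<forall>x\<in>A. \<forall>y\<in>A. \<forall>z\<in>A. le x y \<and> le y z \<longrightarrow> le x z)"

definition is_lub :: "'a set \<Rightarrow> ('a \<Rightarrow> 'a \<Rightarrow> bool) \<Rightarrow> 'a \<Rightarrow> 'a \<Rightarrow> 'a \<Rightarrow> bool" where
  "is_lub A le x y s \<longleftrightarrow> s \<in> A \<and> le x s \<and> le y s \<and>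
     (\<forall>u\<in>A. le x u \<and> le y u \<longrightarrow> le s u)"

definition is_glb :: "'a set \<Rightarrow> ('a \<Rightarrow> 'a \<Rightarrow> bool) \<Rightarrow> 'a \<Rightarrow> 'a \<Rightarrow> 'a \<Rightarrow> bool" where
  "is_glb A le x y s \<longleftrightarrow> s \<in> A \<and> le s x \<and> le s y \<and>
     (\<forall>u\<in>A. le u x \<and> le u y \<longrightarrow> le u s)"

definition lattice_on :: "'a set \<Rightarrow> ('a \<Rightarrow> 'a \<Rightarrow> bool) \<Rightarrow> bool" where
  "lattice_on A le \<longleftrightarrow> poset_on A le \<and>
     (\<forall>x\<in>A. \<forall>y\<in>A. (\<exists>s. is_lub A le x y s) \<and> (\<exists>i. is_glb A le x y i))"

definition upper_covers :: "'a set \<Rightarrow> ('a \<Rightarrow> 'a \<Rightarrow> bool) \<Rightarrow> 'a \<Rightarrow> 'a \<Rightarrow> bool" where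
  "upper_covers A le x y \<longleftrightarrow> x \<in> A \<and> y \<in> A \<and> le y x \<and> y \<noteq> x \<and>
     \<not> (\<exists>z\<in>A. le y z \<and> y \<noteq> z \<and> le z x \<and> z \<noteq> x)"

definition join_irreducible :: "'a set \<Rightarrow> ('a \<Rightarrow> 'a \<Rightarrow> bool) \<Rightarrow> 'a \<Rightarrow> bool" where
  "join_irreducible A le j \<longleftrightarrow> j \<in> A \<and> card {y. upper_covers A le j y} = 1"

definition up_set :: "'a set \<Rightarrow> ('a \<Rightarrow> 'a \<Rightarrow> bool) \<Rightarrow> 'a \<Rightarrow> 'a set" where
  "up_set A le x = {y \<in> A. le x y}"

definition counterexample :: "'a set \<Rightarrow> ('a \<Rightarrow> 'a \<Rightarrow> bool) \<Rightarrow> bool" where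
  "counterexample A le \<longleftrightarrow> finite A \<and> lattice_on A le \<and> card A > 1 \<and>
     (\<forall>j. join_irreducible A le j \<longrightarrow> real (card (up_set A le j)) > real (card A) / 2)"

text \<open>Minimality ranges over all lattices on carriers of the same type; since any smaller
finite lattice is isomorphic to one whose carrier lies in this type, this is equivalent to
minimality over all finite lattices.\<close>
definition min_counterexample :: "'a set \<Rightarrow> ('a \<Rightarrow> 'a \<Rightarrow> bool) \<Rightarrow> bool" where
  "min_counterexample A le \<longleftrightarrow> counterexample A le \<and>
     (\<forall>(B::'a set) le'. counterexample B le' \<longrightarrow> card A \<le> card B)"

definition least_elem :: "'a set \<Rightarrow> ('a \<Rightarrow> 'a \<Rightarrow> bool) \<Rightarrow> 'a \<Rightarrow> bool" where
  "least_elem A le x \<longleftrightarrow> x \<in> A \<and> (\<forall>z\<in>A. le x z)"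

definition greatest_elem :: "'a set \<Rightarrow> ('a \<Rightarrow> 'a \<Rightarrow> bool) \<Rightarrow> 'a \<Rightarrow> bool" where
  "greatest_elem A le x \<longleftrightarrow> x \<in> A \<and> (\<forall>z\<in>A. le z x)"

definition incomparable :: "('a \<Rightarrow> 'a \<Rightarrow> bool) \<Rightarrow> 'a \<Rightarrow> 'a \<Rightarrow> bool" where
  "incomparable le x y \<longleftrightarrow> \<not> le x y \<and> \<not> le y x"

end

theory Submission
  imports Defs
begin

lemma ji_crit:
  assumes P: "poset_on A le" and fA: "f \<in> A" and mA: "m \<in> A" and mf: "le m f" and mnf: "m \<noteq> f"
    and below: "\<forall>z\<in>A. le z f \<and> z \<noteq> f \<longrightarrow> le z m"
  shows "join_irreducible A le f"
proof -
  have anti: "\<forall>x\<in>A. \<forall>y\<in>A. le x y \<and> le y x \<longrightarrow> x = y" using P unfolding poset_on_def by blast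
  have "{y. upper_covers A le f y} = {m}"
  proof (rule set_eqI, rule iffI)
    fix y assume "y \<in> {y. upper_covers A le f y}"
    then have y: "y \<in> A" "le y f" "y \<noteq> f" "\<not>(\<exists>z\<in>A. le y z \<and> y \<noteq> z \<and> le z f \<and> z \<noteq> f)"
      by (auto simp: upper_covers_def)
    then have "le y m" using below by auto
    show "y \<in> {m}"
    proof (rule ccontr)
      assume "y \<notin> {m}" then have "y \<noteq> m" by simp
      with y \<open>le y m\<close> mA mf mnf show False by blast
    qed
  next
    fix y assume "y \<in> {m}" hence ym: "y = m" by simp
    have "\<not>(\<exists>z\<in>A. le m z \<and> m \<noteq> z \<and> le z f \<and> z \<noteq> f)"
    proof
      assume "\<exists>z\<in>A. le m z \<and> m \<noteq> z \<and> le z f \<and> z \<noteq> f"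
      then obtain z where z: "z \<in> A" "le m z" "m \<noteq> z" "le z f" "z \<noteq> f" by blast
      then have "le z m" using below by auto
      with z mA anti show False by blast
    qed
    then show "y \<in> {y. upper_covers A le f y}" using ym fA mA mf mnf by (simp add: upper_covers_def)
  qed
  then show ?thesis using fA by (simp add: join_irreducible_def)
qed

lemma exists_cover_above:
  assumes P: "poset_on A le" and fin: "finite A" and zA: "z \<in> A" and uA: "u \<in> A"
    and zu: "le z u" and znu: "z \<noteq> u"
  shows "\<exists>v. upper_covers A le u v \<and> le z v"
proof -
  have refl: "\<forall>x\<in>A. le x x" and anti: "\<forall>x\<in>A. \<forall>y\<in>A. le x y \<and> le y x \<longrightarrow> x = y"
    and trans: "\<forall>x\<in>A. \<forall>y\<in>A. \<forall>z\<in>A. le x y \<and> le y z \<longrightarrow> le x z"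
    using P unfolding poset_on_def by blast+
  define T where "T = {v \<in> A. le z v \<and> le v u \<and> v \<noteq> u}"
  define d where "d = (\<lambda>v. card {y \<in> A. le y v})"
  have finT: "finite T" using fin by (simp add: T_def)
  have zT: "z \<in> T" using zA zu znu refl by (simp add: T_def)
  define M where "M = Max (d ` T)"
  have "M \<in> d ` T" unfolding M_def using finT zT by (intro Max_in) auto
  then obtain v where vT: "v \<in> T" and dv: "d v = M" by blast
  have vmax: "\<forall>w\<in>T. d w \<le> d v" using finT dv unfolding M_def by auto
  have v: "v \<in> A" "le z v" "le v u" "v \<noteq> u" using vT by (auto simp: T_def)
  have "\<not>(\<exists>w\<in>A. le v w \<and> v \<noteq> w \<and> le w u \<and> w \<noteq> u)"
  proof
    assume "\<exists>w\<in>A. le v w \<and> v \<noteq> w \<and> le w u \<and> w \<noteq> u"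
    then obtain w where w: "w \<in> A" "le v w" "v \<noteq> w" "le w u" "w \<noteq> u" by blast
    have "le z w" using trans zA v(1) w(1) v(2) w(2) by blast
    then have wT: "w \<in> T" using w by (simp add: T_def)
    have sub: "{y \<in> A. le y v} \<subset> {y \<in> A. le y w}"
    proof
      show "{y \<in> A. le y v} \<subseteq> {y \<in> A. le y w}" using w(1,2) v(1) trans by blast
      have "w \<notin> {y \<in> A. le y v}" using w v anti by auto
      moreover have "w \<in> {y \<in> A. le y w}" using w refl by auto
      ultimately show "{y \<in> A. le y v} \<noteq> {y \<in> A. le y w}" by blast
    qed
    have "d v < d w" unfolding d_def using sub fin by (intro psubset_card_mono) auto
    with vmax wT show False by fastforce
  qed
  then have "upper_covers A le u v" using v uA by (simp add: upper_covers_def)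
  then show ?thesis using v by blast
qed

lemma chain_min:
  assumes "finite S" "S \<noteq> {}" "\<forall>a\<in>S. \<forall>b\<in>S. le a b \<or> le b a"
    "\<forall>a\<in>S. \<forall>b\<in>S. \<forall>c\<in>S. le a b \<longrightarrow> le b c \<longrightarrow> le a c"
  shows "\<exists>m\<in>S. \<forall>c\<in>S. le m c"
  using assms
proof (induction S rule: finite_ne_induct)
  case (singleton x)
  then have "le x x" by blast
  then show ?case by blast
next
  case (insert x F)
  have tot: "\<forall>a\<in>F. \<forall>b\<in>F. le a b \<or> le b a" using insert.prems by blast
  have tr: "\<forall>a\<in>F. \<forall>b\<in>F. \<forall>c\<in>F. le a b \<longrightarrow> le b c \<longrightarrow> le a c" using insert.prems by blast
  obtain m where m: "m \<in> F" "\<forall>c\<in>F. le m c" using insert.IH[OF tot tr] by blast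
  show ?case
  proof (cases "le x m")
    case True
    have "\<forall>c\<in>insert x F. le x c"
    proof
      fix c assume c: "c \<in> insert x F"
      show "le x c"
      proof (cases "c = x")
        case True then show ?thesis using insert.prems(1) by blast
      next
        case False then have "c \<in> F" using c by simp
        then show ?thesis using True m insert.prems(2) by blast
      qed
    qed
    then show ?thesis by blast
  next
    case False
    then have "le m x" using insert.prems(1) m by blast
    then have "\<forall>c\<in>insert x F. le m c" using m by blast
    then show ?thesis using m by blast
  qed
qed

lemma chain_max:
  assumes "finite S" "S \<noteq> {}" "\<forall>a\<in>S. \<forall>b\<in>S. le a b \<or> le b a"
    "\<forall>a\<in>S. \<forall>b\<in>S. \<forall>c\<in>S. le a b \<longrightarrow> le b c \<longrightarrow> le a c"
  shows "\<exists>m\<in>S. \<forall>c\<in>S. le c m"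
proof -
  have "\<exists>m\<in>S. \<forall>c\<in>S. (\<lambda>a b. le b a) m c"
    by (rule chain_min) (use assms in blast)+
  then show ?thesis by simp
qed

theorem theorem2p13:
  fixes L :: "'a set" and le :: "'a \<Rightarrow> 'a \<Rightarrow> bool" and x :: 'a
  assumes "min_counterexample L le"
    and "x \<in> L" and "\<not> least_elem L le x" and "\<not> greatest_elem L le x"
  shows "\<exists>y\<in>L. \<exists>z\<in>L. incomparable le y z \<and> incomparable le y x \<and> incomparable le z x"
proof (rule ccontr)
  assume H: "\<not> ?thesis"
  note xL = assms(2)
  have cexL: "counterexample L le" and minimal: "\<forall>(B::'a set) le'. counterexample B le' \<longrightarrow> card L \<le> card B"
    using assms(1) by (auto simp: min_counterexample_def)
  have finL: "finite L" and latL: "lattice_on L le"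
    and cex: "\<forall>j. join_irreducible L le j \<longrightarrow> real (card (up_set L le j)) > real (card L) / 2"
    using cexL by (auto simp: counterexample_def)
  have cex2: "card L < 2 * card (up_set L le j)" if "join_irreducible L le j" for j
  proof -
    have "real (card (up_set L le j)) > real (card L) / 2" using cex that by blast
    then have "real (card L) < real (2 * card (up_set L le j))" by simp
    then show ?thesis by linarith
  qed
  have PL: "poset_on L le" using latL by (simp add: lattice_on_def)
  have refl: "\<forall>x\<in>L. le x x" and anti: "\<forall>x\<in>L. \<forall>y\<in>L. le x y \<and> le y x \<longrightarrow> x = y"
    and trans: "\<forall>x\<in>L. \<forall>y\<in>L. \<forall>z\<in>L. le x y \<and> le y z \<longrightarrow> le x z"
    using PL unfolding poset_on_def by blast+
  have lub: "\<exists>s. is_lub L le a b s" if "a \<in> L" "b \<in> L" for a b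
    using latL that by (simp add: lattice_on_def)
  have glb: "\<exists>i. is_glb L le a b i" if "a \<in> L" "b \<in> L" for a b
    using latL that by (simp add: lattice_on_def)
  define C where "C = {y \<in> L. incomparable le y x}"
  have CL: "C \<subseteq> L" by (auto simp: C_def)
  have chain: "\<forall>a\<in>C. \<forall>b\<in>C. le a b \<or> le b a"
  proof (intro ballI)
    fix a b assume a: "a \<in> C" and b: "b \<in> C"
    show "le a b \<or> le b a"
    proof (rule ccontr)
      assume "\<not> (le a b \<or> le b a)"
      then have "incomparable le a b" by (simp add: incomparable_def)
      with a b H show False by (auto simp: C_def)
    qed
  qed
  have trC: "\<forall>a\<in>S. \<forall>b\<in>S. \<forall>c\<in>S. le a b \<longrightarrow> le b c \<longrightarrow> le a c" if "S \<subseteq> L" for S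
    using trans that by blast
  define Q where "Q = up_set L le x"
  have Q_eq: "Q = {y \<in> L. le x y}" by (simp add: Q_def up_set_def)
  have QL: "Q \<subseteq> L" and xQ: "x \<in> Q" using xL refl by (auto simp: Q_eq)
  have finQ: "finite Q" using finL QL finite_subset by blast
  have PQ: "poset_on Q le" using PL QL unfolding poset_on_def by blast
  have lbQ: "\<forall>a\<in>Q. \<forall>b\<in>Q. (\<exists>s. is_lub Q le a b s) \<and> (\<exists>i. is_glb Q le a b i)"
  proof (intro ballI)
    fix a b assume a: "a \<in> Q" and b: "b \<in> Q"
    have aL: "a \<in> L" and bL: "b \<in> L" and xa: "le x a" and xb: "le x b" using a b by (auto simp: Q_eq)
    obtain s where s: "is_lub L le a b s" using lub[OF aL bL] by blast
    have "s \<in> L" "le a s" "le b s" using s by (auto simp: is_lub_def)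
    then have "le x s" using trans xL aL xa by blast
    then have "s \<in> Q" using \<open>s \<in> L\<close> by (simp add: Q_eq)
    then have "is_lub Q le a b s" using s QL by (auto simp: is_lub_def)
    moreover
    obtain i where i: "is_glb L le a b i" using glb[OF aL bL] by blast
    have "le x i" using i xL xa xb by (auto simp: is_glb_def)
    then have "i \<in> Q" using i by (auto simp: Q_eq is_glb_def)
    then have "is_glb Q le a b i" using i QL by (auto simp: is_glb_def)
    ultimately show "(\<exists>s. is_lub Q le a b s) \<and> (\<exists>i. is_glb Q le a b i)" by blast
  qed
  have latQ: "lattice_on Q le" using PQ lbQ by (simp add: lattice_on_def)
  obtain z0 where z0: "z0 \<in> L" "\<not> le z0 x" using assms(4) xL by (auto simp: greatest_elem_def)
  obtain s0 where s0: "is_lub L le x z0 s0" using lub[OF xL z0(1)] by blast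
  have s0Q: "s0 \<in> Q" and s0x: "s0 \<noteq> x" using s0 z0 by (auto simp: is_lub_def Q_eq)
  have cardQ1: "card Q > 1"
  proof -
    have "{x, s0} \<subseteq> Q" using xQ s0Q by auto
    then have "card {x, s0} \<le> card Q" using finQ by (rule card_mono[rotated])
    then show ?thesis using s0x by simp
  qed
  obtain z1 where z1: "z1 \<in> L" "\<not> le x z1" using assms(3) xL by (auto simp: least_elem_def)
  have "Q \<subset> L" using QL z1 by (auto simp: Q_eq)
  then have cardQL: "card Q < card L" using finL by (rule psubset_card_mono[rotated])
  have "\<not> counterexample Q le"
  proof
    assume "counterexample Q le"
    then have "card L \<le> card Q" using minimal by blast
    with cardQL show False by simp
  qed
  then obtain u where uji: "join_irreducible Q le u"
    and usmall0: "\<not> real (card (up_set Q le u)) > real (card Q) / 2"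
    using finQ latQ cardQ1 by (auto simp: counterexample_def)
  have usmall: "2 * card (up_set Q le u) \<le> card Q"
  proof -
    have "real (2 * card (up_set Q le u)) \<le> real (card Q)" using usmall0 by simp
    then show ?thesis by linarith
  qed
  have uQ: "u \<in> Q" using uji by (simp add: join_irreducible_def)
  have uL: "u \<in> L" and xu: "le x u" using uQ by (auto simp: Q_eq)
  have upQ: "up_set Q le u = up_set L le u"
    using uQ xL trans unfolding up_set_def Q_eq by blast
  have "card {y. upper_covers Q le u y} = 1" using uji by (simp add: join_irreducible_def)
  then obtain us where usQ: "{y. upper_covers Q le u y} = {us}" by (rule card_1_singletonE)
  have us: "upper_covers Q le u us" using usQ by blast
  have usQ': "us \<in> Q" "le us u" "us \<noteq> u" using us by (auto simp: upper_covers_def)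
  have usL: "us \<in> L" and xus: "le x us" using usQ' by (auto simp: Q_eq)
  have usL_cov: "upper_covers L le u us"
  proof -
    have "\<not>(\<exists>z\<in>L. le us z \<and> us \<noteq> z \<and> le z u \<and> z \<noteq> u)"
    proof
      assume "\<exists>z\<in>L. le us z \<and> us \<noteq> z \<and> le z u \<and> z \<noteq> u"
      then obtain z where z: "z \<in> L" "le us z" "us \<noteq> z" "le z u" "z \<noteq> u" by blast
      have "le x z" using trans xL usL z xus by blast
      then have "z \<in> Q" using z by (simp add: Q_eq)
      with z us show False by (auto simp: upper_covers_def)
    qed
    then show ?thesis using usL uL usQ' by (simp add: upper_covers_def)
  qed
  have below_u: "le z us" if zQ: "z \<in> Q" and zu: "le z u" and znu: "z \<noteq> u" for z
  proof -
    obtain v where v: "upper_covers Q le u v" "le z v"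
      using exists_cover_above[OF PQ finQ zQ uQ zu znu] by blast
    then have "v = us" using usQ by blast
    then show ?thesis using v by simp
  qed
  have not_ji: "\<not> join_irreducible L le u"
  proof
    assume "join_irreducible L le u"
    then have "card L < 2 * card (up_set L le u)" by (rule cex2)
    with usmall upQ cardQL show False by simp
  qed
  obtain w where wcov: "upper_covers L le u w" and wus: "w \<noteq> us"
  proof -
    have "card {y. upper_covers L le u y} \<noteq> 1" using not_ji uL by (simp add: join_irreducible_def)
    moreover have "us \<in> {y. upper_covers L le u y}" using usL_cov by simp
    ultimately have "\<exists>w\<in>{y. upper_covers L le u y}. w \<noteq> us"
    proof -
      assume c: "card {y. upper_covers L le u y} \<noteq> 1" and m: "us \<in> {y. upper_covers L le u y}"
      show ?thesis
      proof (rule ccontr)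
        assume "\<not> ?thesis"
        then have "{y. upper_covers L le u y} = {us}" using m by blast
        with c show False by simp
      qed
    qed
    then show ?thesis using that by blast
  qed
  have w: "w \<in> L" "le w u" "w \<noteq> u" "\<not>(\<exists>z\<in>L. le w z \<and> w \<noteq> z \<and> le z u \<and> z \<noteq> u)"
    using wcov by (auto simp: upper_covers_def)
  have w_not_us: "\<not> le w us" using w usL usQ' wus by blast
  have wC: "w \<in> C"
  proof -
    have "\<not> le x w"
    proof
      assume "le x w"
      then have wQ: "w \<in> Q" using w by (simp add: Q_eq)
      have "upper_covers Q le u w" using wcov wQ uQ QL by (auto simp: upper_covers_def)
      then have "w = us" using usQ by blast
      with wus show False by simp
    qed
    moreover have "\<not> le w x"
    proof
      assume "le w x"
      then have "le w us" using trans w xL usL xus by blast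
      with w_not_us show False by simp
    qed
    ultimately show ?thesis using w by (simp add: C_def incomparable_def)
  qed
  define S where "S = {c \<in> C. le c u \<and> \<not> le c us}"
  have SC: "S \<subseteq> C" by (auto simp: S_def)
  have finC: "finite C" using finL CL finite_subset by blast
  have finS: "finite S" using finC SC finite_subset by blast
  have wS: "w \<in> S" using wC w w_not_us by (simp add: S_def)
  obtain f where fS: "f \<in> S" and fmin: "\<forall>c\<in>S. le f c"
    using chain_min[OF finS _ _ trC] wS chain SC CL by blast
  have fC: "f \<in> C" and fu: "le f u" and fnus: "\<not> le f us" using fS by (auto simp: S_def)
  have fL: "f \<in> L" using fC CL by blast
  have f_inc: "\<not> le f x" "\<not> le x f" using fC by (auto simp: C_def incomparable_def)
  have f_below: "le z us" if zL: "z \<in> L" and zf: "le z f" and znf: "z \<noteq> f" for z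
  proof (cases "le z x")
    case True then show ?thesis using trans zL xL usL xus by blast
  next
    case False
    show ?thesis
    proof (cases "le x z")
      case True
      then have "le x f" using trans xL zL fL zf by blast
      with f_inc show ?thesis by simp
    next
      case False2: False
      then have zC: "z \<in> C" using False zL by (simp add: C_def incomparable_def)
      have zu: "le z u" using trans zL fL uL zf fu by blast
      show ?thesis
      proof (rule ccontr)
        assume "\<not> le z us"
        then have "z \<in> S" using zC zu by (simp add: S_def)
        then have "le f z" using fmin by blast
        with zf anti zL fL znf show False by blast
      qed
    qed
  qed
  have fji: "join_irreducible L le f"
  proof -
    obtain m0 where m0: "is_glb L le f us m0" using glb[OF fL usL] by blast
    have m0L: "m0 \<in> L" and m0f: "le m0 f" and m0us: "le m0 us"
      and m0g: "\<forall>v\<in>L. le v f \<and> le v us \<longrightarrow> le v m0" using m0 by (auto simp: is_glb_def)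
    have "m0 \<noteq> f" using m0us fnus by blast
    moreover have "\<forall>z\<in>L. le z f \<and> z \<noteq> f \<longrightarrow> le z m0" using f_below m0g by blast
    ultimately show ?thesis using ji_crit[OF PL fL m0L m0f] by blast
  qed
  have f_x_u: "le u y" if yL: "y \<in> L" and fy: "le f y" and xy: "le x y" for y
  proof -
    obtain s where s: "is_lub L le f x s" using lub[OF fL xL] by blast
    have sL: "s \<in> L" and fs: "le f s" and xs: "le x s"
      and sg: "\<forall>v\<in>L. le f v \<and> le x v \<longrightarrow> le s v" using s by (auto simp: is_lub_def)
    have su: "le s u" using sg uL fu xu by blast
    have sQ: "s \<in> Q" using sL xs by (simp add: Q_eq)
    have "s = u"
    proof (rule ccontr)
      assume "s \<noteq> u"
      then have "le s us" using below_u[OF sQ su] by blast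
      then have "le f us" using trans fL sL usL fs by blast
      with fnus show False by simp
    qed
    then show ?thesis using sg yL fy xy by blast
  qed
  define J where "J = {c \<in> C. join_irreducible L le c}"
  have JC: "J \<subseteq> C" by (auto simp: J_def)
  have finJ: "finite J" using finC JC finite_subset by blast
  have fJ: "f \<in> J" using fC fji by (simp add: J_def)
  obtain g where gJ: "g \<in> J" and gmax: "\<forall>c\<in>J. le c g"
    using chain_max[OF finJ _ _ trC] fJ chain JC CL by blast
  have gC: "g \<in> C" and gji: "join_irreducible L le g" using gJ by (auto simp: J_def)
  have gL: "g \<in> L" using gC CL by blast
  have fg: "le f g" using gmax fJ by blast
  have g_inc: "\<not> le g x" "\<not> le x g" using gC by (auto simp: C_def incomparable_def)
  have up_g: "up_set L le g \<subseteq> (C \<inter> up_set L le g) \<union> up_set L le u"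
  proof
    fix y assume "y \<in> up_set L le g"
    then have yL: "y \<in> L" and gy: "le g y" by (auto simp: up_set_def)
    show "y \<in> (C \<inter> up_set L le g) \<union> up_set L le u"
    proof (cases "y \<in> C")
      case True then show ?thesis using yL gy by (simp add: up_set_def)
    next
      case False
      then have "le y x \<or> le x y" using yL by (auto simp: C_def incomparable_def)
      moreover have "\<not> le y x"
      proof
        assume "le y x" then have "le g x" using trans gL yL xL gy by blast
        with g_inc show False by simp
      qed
      ultimately have xy: "le x y" by blast
      have "le f y" using trans fL gL yL fg gy by blast
      then have "le u y" using f_x_u[OF yL _ xy] by blast
      then show ?thesis using yL by (simp add: up_set_def)
    qed
  qed
  define G where "G = C \<inter> up_set L le g"
  have finG: "finite G" using finC by (simp add: G_def)
  have finUpu: "finite (up_set L le u)" using finL by (simp add: up_set_def)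
  have card_up_g: "card (up_set L le g) \<le> card G + card (up_set L le u)"
  proof -
    have "card (up_set L le g) \<le> card (G \<union> up_set L le u)"
      using up_g finG finUpu by (intro card_mono) (auto simp: G_def)
    also have "\<dots> \<le> card G + card (up_set L le u)" by (rule card_Un_le)
    finally show ?thesis .
  qed
  define phi where "phi = (\<lambda>c. SOME i. is_glb L le c x i)"
  have phi: "is_glb L le c x (phi c)" if "c \<in> L" for c
    unfolding phi_def using glb[OF that xL] by (rule someI_ex)
  define D where "D = {y \<in> L. le y x \<and> y \<noteq> x}"
  have key: "c1 = c2" if c1: "c1 \<in> C" and c2: "c2 \<in> C" and gc1: "le g c1" and c12: "le c1 c2"
    and ph: "phi c1 = phi c2" for c1 c2
  proof (rule ccontr)
    assume ne: "c1 \<noteq> c2"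
    have c1L: "c1 \<in> L" and c2L: "c2 \<in> L" using c1 c2 CL by auto
    define Pr where "Pr = {z \<in> C. le z c2 \<and> z \<noteq> c2}"
    have PrC: "Pr \<subseteq> C" by (auto simp: Pr_def)
    have finPr: "finite Pr" using finC PrC finite_subset by blast
    have c1Pr: "c1 \<in> Pr" using c1 c12 ne by (simp add: Pr_def)
    obtain m where mPr: "m \<in> Pr" and mmax: "\<forall>z\<in>Pr. le z m"
      using chain_max[OF finPr _ _ trC] c1Pr chain PrC CL by blast
    have mL: "m \<in> L" and mc2: "le m c2" and mnc2: "m \<noteq> c2" using mPr CL by (auto simp: Pr_def)
    have c1m: "le c1 m" using mmax c1Pr by blast
    have c2inc: "\<not> le c2 x" "\<not> le x c2" using c2 by (auto simp: C_def incomparable_def)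
    have pc1: "is_glb L le c1 x (phi c1)" and pc2: "is_glb L le c2 x (phi c2)" using phi c1L c2L by auto
    have below: "\<forall>z\<in>L. le z c2 \<and> z \<noteq> c2 \<longrightarrow> le z m"
    proof (intro ballI impI)
      fix z assume zL: "z \<in> L" and zz: "le z c2 \<and> z \<noteq> c2"
      show "le z m"
      proof (cases "le z x")
        case True
        then have "le z (phi c2)" using pc2 zL zz by (auto simp: is_glb_def)
        then have "le z (phi c1)" using ph by simp
        moreover have "le (phi c1) c1" "phi c1 \<in> L" using pc1 by (auto simp: is_glb_def)
        ultimately have "le z c1" using trans zL c1L by blast
        then show ?thesis using trans zL c1L mL c1m by blast
      next
        case False
        have "\<not> le x z"
        proof
          assume "le x z" then have "le x c2" using trans xL zL c2L zz by blast
          with c2inc show False by simp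
        qed
        then have "z \<in> C" using False zL by (simp add: C_def incomparable_def)
        then have "z \<in> Pr" using zz by (simp add: Pr_def)
        then show ?thesis using mmax by blast
      qed
    qed
    have "join_irreducible L le c2" using ji_crit[OF PL c2L mL mc2 mnc2 below] .
    then have "c2 \<in> J" using c2 by (simp add: J_def)
    then have "le c2 g" using gmax by blast
    have "le g c2" using trans gL c1L c2L gc1 c12 by blast
    have "c2 = g" using anti c2L gL \<open>le c2 g\<close> \<open>le g c2\<close> by blast
    moreover have "c1 = g" using anti c1L gL gc1 c12 \<open>c2 = g\<close> by blast
    ultimately show False using ne by simp
  qed
  have inj: "inj_on phi G"
  proof (rule inj_onI)
    fix c1 c2 assume a1: "c1 \<in> G" and a2: "c2 \<in> G" and ph: "phi c1 = phi c2"
    have c1: "c1 \<in> C" "le g c1" and c2: "c2 \<in> C" "le g c2" using a1 a2 by (auto simp: G_def up_set_def)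
    show "c1 = c2"
    proof (cases "le c1 c2")
      case True then show ?thesis using key c1 c2 ph by blast
    next
      case False
      then have "le c2 c1" using chain c1 c2 by blast
      then show ?thesis using key c1 c2 ph by metis
    qed
  qed
  have phiD: "phi ` G \<subseteq> D"
  proof
    fix y assume "y \<in> phi ` G"
    then obtain c where cG: "c \<in> G" and yc: "y = phi c" by blast
    have cC: "c \<in> C" using cG by (simp add: G_def)
    have cL: "c \<in> L" using cC CL by blast
    have p: "is_glb L le c x (phi c)" using phi cL by blast
    have "phi c \<noteq> x"
    proof
      assume "phi c = x"
      then have "le x c" using p by (auto simp: is_glb_def)
      with cC show False by (simp add: C_def incomparable_def)
    qed
    then show "y \<in> D" using p yc by (auto simp: D_def is_glb_def)
  qed
  have finD: "finite D" using finL by (simp add: D_def)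
  have GD: "card G \<le> card D"
  proof -
    have "card G = card (phi ` G)" using inj by (simp add: card_image)
    also have "\<dots> \<le> card D" using phiD finD by (rule card_mono[rotated])
    finally show ?thesis .
  qed
  have GC: "card G \<le> card C" using finC by (intro card_mono) (auto simp: G_def)
  have part: "L = D \<union> C \<union> Q"
    unfolding D_def C_def Q_eq incomparable_def by blast
  have disj1: "D \<inter> C = {}" by (auto simp: D_def C_def incomparable_def)
  have disj2: "(D \<union> C) \<inter> Q = {}"
  proof -
    have "y \<notin> Q" if "y \<in> D \<union> C" for y
    proof
      assume yQ: "y \<in> Q"
      then have yL: "y \<in> L" and xy: "le x y" by (auto simp: Q_eq)
      show False
      proof (cases "y \<in> D")
        case True
        then have "le y x" "y \<noteq> x" by (auto simp: D_def)
        with anti xL yL xy show False by blast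
      next
        case False
        then have "y \<in> C" using that by blast
        with xy show False by (simp add: C_def incomparable_def)
      qed
    qed
    then show ?thesis by blast
  qed
  have cardL: "card L = card D + card C + card Q"
  proof -
    have "card L = card (D \<union> C) + card Q"
      using part disj2 finD finC finQ by (simp add: card_Un_disjoint)
    also have "card (D \<union> C) = card D + card C"
      using disj1 finD finC by (simp add: card_Un_disjoint)
    finally show ?thesis .
  qed
  have "card L < 2 * card (up_set L le g)" using cex2[OF gji] .
  moreover have "2 * card (up_set L le g) \<le> card L"
  proof -
    have "2 * card (up_set L le u) \<le> card Q" using usmall upQ by simp
    then show ?thesis using card_up_g GD GC cardL by linarith
  qed
  ultimately show False by simp
qed

end
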